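(* Let $\mathcal{F}$ be a $3$-uniform linear set system with maximum matching size $\nu(\mathcal{F})=\nu$ and maximum degree $\Delta(\mathcal{F})=\Delta$. If $\Delta\geq 5$, then $|\mathcal{F}|\leq 2\Delta\nu$.
   Context: A set system $\mathcal{F}$ is a finite collection of distinct subsets of a vertex set $V$. It is $3$-uniform if every member has exactly $3$ elements, and linear if $|A\cap B|\leq 1$ for all distinct $A,B\in\mathcal{F}$. A matching is a collection of pairwise disjoint members of $\mathcal{F}$; $\nu(\mathcal{F})$ is the maximum size of a matching. For a vertex $x$, $\mathcal{F}_x=\{A\in\mathcal{F}: x\in A\}$, and $\Delta(\mathcal{F})=\max_x|\mathcal{F}_x|$. *)

theory Defs
  imports Main
begin

definition uniform3 :: "'a set set \<Rightarrow> bool" where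
  "uniform3 F \<longleftrightarrow> (\<forall>A\<in>F. card A = 3)"

definition linear_sys :: "'a set set \<Rightarrow> bool" where
  "linear_sys F \<longleftrightarrow> (\<forall>A\<in>F. \<forall>B\<in>F. A \<noteq> B \<longrightarrow> card (A \<inter> B) \<le> 1)"

definition is_matching :: "'a set set \<Rightarrow> 'a set set \<Rightarrow> bool" where
  "is_matching F M \<longleftrightarrow> M \<subseteq> F \<and> (\<forall>A\<in>M. \<forall>B\<in>M. A \<noteq> B \<longrightarrow> A \<inter> B = {})"

definition matching_number :: "'a set set \<Rightarrow> nat" where
  "matching_number F = Max (card ` {M. is_matching F M})"

definition star :: "'a set set \<Rightarrow> 'a \<Rightarrow> 'a set set" where
  "star F x = {A\<in>F. x \<in> A}"

definition max_degree :: "'a set set \<Rightarrow> nat" where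
  "max_degree F = Max ({card (star F x) | x. x \<in> \<Union>F} \<union> {0})"

end

theory Submission
  imports Defs
begin

lemma double_count:
  assumes "finite V" "finite G"
  shows "(\<Sum>v\<in>V. card {f\<in>G. P f v}) = (\<Sum>f\<in>G. card {v\<in>V. P f v})"
proof -
  have "(\<Sum>v\<in>V. card {f\<in>G. P f v}) = (\<Sum>v\<in>V. \<Sum>f\<in>G. if P f v then 1 else 0)"
    using assms by (simp add: sum.If_cases Int_def)
  also have "\<dots> = (\<Sum>f\<in>G. \<Sum>v\<in>V. if P f v then 1 else 0)" by (rule sum.swap)
  also have "\<dots> = (\<Sum>f\<in>G. card {v\<in>V. P f v})"
    using assms by (simp add: sum.If_cases Int_def)
  finally show ?thesis .
qed

lemma inter_one:
  assumes "linear_sys F" "A \<in> F" "B \<in> F" "A \<noteq> B" "x \<in> A" "x \<in> B" "finite A"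
  shows "A \<inter> B = {x}"
proof -
  have "card (A \<inter> B) \<le> Suc 0" using assms unfolding linear_sys_def by auto
  then show ?thesis using assms card_le_Suc0_iff_eq[of "A \<inter> B"] by auto
qed

lemma fin3: "uniform3 F \<Longrightarrow> f \<in> F \<Longrightarrow> finite f"
  unfolding uniform3_def by (metis card.infinite zero_neq_numeral)

lemma aug:
  fixes F M :: "'a set set"
  assumes unif: "uniform3 F" and lin: "linear_sys F"
    and M: "is_matching F M" and fM: "finite M"
    and maxM: "\<And>M'. is_matching F M' \<Longrightarrow> card M' \<le> card M"
    and e: "e \<in> M" "u \<in> e" "v \<in> e" "u \<noteq> v"
    and f: "f1 \<in> F" "f2 \<in> F" "f3 \<in> F" "f1 \<notin> M" "f2 \<notin> M" "f3 \<notin> M"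
       "f1 \<inter> \<Union>M = {v}" "f2 \<inter> \<Union>M = {v}" "f3 \<inter> \<Union>M = {v}" "f1\<noteq>f2" "f1\<noteq>f3" "f2\<noteq>f3"
    and g: "g\<in>F" "g\<notin>M" "g \<inter> \<Union>M = {u}"
  shows False
proof -
  have uV: "u \<in> \<Union>M" "v \<in> \<Union>M" using e by auto
  have vf: "v \<in> f1" "v \<in> f2" "v \<in> f3" using f by auto
  have fg: "\<exists>f\<in>{f1,f2,f3}. f \<inter> g = {}"
  proof (rule ccontr)
    assume na: "\<not> ?thesis"
    have ne: "f1 \<inter> g \<noteq> {}" "f2 \<inter> g \<noteq> {}" "f3 \<inter> g \<noteq> {}" using na by simp_all
    obtain x1 where "x1 \<in> f1 \<inter> g" using ne(1) by blast
    moreover obtain x2 where "x2 \<in> f2 \<inter> g" using ne(2) by blast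
    moreover obtain x3 where "x3 \<in> f3 \<inter> g" using ne(3) by blast
    ultimately have x: "x1\<in>f1" "x1\<in>g" "x2\<in>f2" "x2\<in>g" "x3\<in>f3" "x3\<in>g" by simp_all
    have i12: "f1 \<inter> f2 = {v}" by (rule inter_one[OF lin f(1,2) f(10) vf(1,2) fin3[OF unif f(1)]])
    have i13: "f1 \<inter> f3 = {v}" by (rule inter_one[OF lin f(1,3) f(11) vf(1,3) fin3[OF unif f(1)]])
    have i23: "f2 \<inter> f3 = {v}" by (rule inter_one[OF lin f(2,3) f(12) vf(2,3) fin3[OF unif f(2)]])
    have vg: "v \<notin> g" by (metis IntI singletonD uV(2) e(4) g(3))
    have gen1: "y \<noteq> u" if "y \<in> h" "h \<inter> \<Union>M = {v}" for y h
      using that uV(1) e(4) by (metis IntI singletonD)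
    have gen2: "False" if "y \<in> h" "y \<in> h'" "h \<inter> h' = {v}" "y \<in> g" for y h h'
      using that vg by (metis IntI singletonD)
    have xu: "x1 \<noteq> u" "x2 \<noteq> u" "x3 \<noteq> u"
      using gen1[OF x(1) f(7)] gen1[OF x(3) f(8)] gen1[OF x(5) f(9)] by auto
    have xd: "x1 \<noteq> x2" "x1 \<noteq> x3" "x2 \<noteq> x3"
      using gen2[OF x(1) _ i12 x(2)] gen2[OF x(1) _ i13 x(2)] gen2[OF x(3) _ i23 x(4)] x by auto
    have sub: "{x1,x2,x3} \<subseteq> g - {u}" using x xu by blast
    have c3: "card {x1,x2,x3} = 3" using xd by simp
    have "card g = 3" using unif g(1) unfolding uniform3_def by auto
    moreover have "u \<in> g" using g(3) by blast
    ultimately have "card (g - {u}) = 2" by simp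
    moreover have "card {x1,x2,x3} \<le> card (g - {u})"
      by (rule card_mono[OF _ sub]) (use fin3[OF unif g(1)] in simp)
    ultimately show False using c3 by simp
  qed
  then obtain f where ff: "f \<in> {f1,f2,f3}" "f \<inter> g = {}" by blast
  have fF: "f\<in>F \<and> f\<notin>M \<and> f\<inter>\<Union>M={v}"
  proof -
    have "f=f1 \<or> f=f2 \<or> f=f3" using ff(1) by simp
    thus ?thesis using f(1-9) by (elim disjE) simp_all
  qed
  hence fF: "f\<in>F" "f\<notin>M" "f\<inter>\<Union>M={v}" by auto
  have MF: "M \<subseteq> F" and Md: "\<And>A B. A\<in>M \<Longrightarrow> B\<in>M \<Longrightarrow> A \<noteq> B \<Longrightarrow> A \<inter> B = {}"
    using M unfolding is_matching_def by auto
  define M' where "M' = insert f (insert g (M - {e}))"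
  have fd: "f \<inter> d = {}" if "d \<in> M - {e}" for d
  proof -
    have "f \<inter> d \<subseteq> {v}" using fF(3) that by blast
    moreover have "v \<notin> d" using Md[of e d] that e by blast
    ultimately show ?thesis by blast
  qed
  have gd: "g \<inter> d = {}" if "d \<in> M - {e}" for d
  proof -
    have "g \<inter> d \<subseteq> {u}" using g(3) that by blast
    moreover have "u \<notin> d" using Md[of e d] that e by blast
    ultimately show ?thesis by blast
  qed
  have "is_matching F M'"
    unfolding is_matching_def
  proof
    show "M' \<subseteq> F" unfolding M'_def using MF fF(1) g(1) by blast
    show "\<forall>A\<in>M'. \<forall>B\<in>M'. A \<noteq> B \<longrightarrow> A \<inter> B = {}"
    proof (intro ballI impI)
      fix A B assume AB: "A \<in> M'" "B \<in> M'" "A \<noteq> B"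
      show "A \<inter> B = {}"
        using AB unfolding M'_def
        apply (simp only: insert_iff)
        apply (elim disjE)
        using Md fd gd ff(2) by (simp_all add: Int_commute)
    qed
  qed
  hence le: "card M' \<le> card M" by (rule maxM)
  have "f \<noteq> g" using ff(2) fF(3) by blast
  hence "card M' = card (M - {e}) + 2" unfolding M'_def using fM fF(2) g(2) by simp
  moreover have "card (M - {e}) + 1 = card M"
  proof -
    have "card M > 0" using e(1) fM card_gt_0_iff by blast
    thus ?thesis using e(1) fM by simp
  qed
  ultimately show False using le by simp
qed


lemma per_edge:
  fixes F M :: "'a set set"
  assumes fin: "finite F" and unif: "uniform3 F" and lin: "linear_sys F"
    and M: "is_matching F M" and fM: "finite M"
    and maxM: "\<And>M'. is_matching F M' \<Longrightarrow> card M' \<le> card M"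
    and e: "e \<in> M"
    and A: "\<And>v. v \<in> \<Union>M \<Longrightarrow> card {f\<in>F-M. v\<in>f} \<le> D - 1"
    and D: "D \<ge> 5"
  shows "(\<Sum>v\<in>e. card {f\<in>F-M. f\<inter>\<Union>M={v}}) \<le> D + 1"
proof -
  define P where "P v = {f\<in>F-M. f\<inter>\<Union>M={v}}" for v
  have Pb: "card (P v) \<le> D - 1" if "v\<in>e" for v
  proof -
    have "P v \<subseteq> {f\<in>F-M. v\<in>f}" unfolding P_def by blast
    hence "card (P v) \<le> card {f\<in>F-M. v\<in>f}" by (rule card_mono[rotated]) (use fin in simp)
    also have "\<dots> \<le> D - 1" using A that e by blast
    finally show ?thesis .
  qed
  have MF: "M \<subseteq> F" using M unfolding is_matching_def by auto
  have ce: "card e = 3" "finite e" using unif MF e fin3[OF unif] unfolding uniform3_def by auto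
  show ?thesis
  proof (cases "\<exists>v\<in>e. card (P v) \<ge> 3")
    case True
    then obtain v where v: "v\<in>e" "card (P v) \<ge> 3" by blast
    obtain T where T: "T \<subseteq> P v" "card T = 3" using obtain_subset_with_card_n[OF v(2)] by metis
    then obtain f1 f2 f3 where T': "T = {f1,f2,f3}" "f1\<noteq>f2" "f2\<noteq>f3" "f1\<noteq>f3"
      by (auto simp: card_3_iff)
    have fs: "f1\<in>P v" "f2\<in>P v" "f3\<in>P v" using T T' by auto
    have empty: "P u = {}" if u: "u \<in> e - {v}" for u
    proof (rule ccontr)
      assume "P u \<noteq> {}" then obtain g where g: "g \<in> P u" by blast
      show False
        apply (rule aug[OF unif lin M fM maxM e, of u v f1 f2 f3 g])
        using fs g u v(1) T' unfolding P_def by auto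
    qed
    have "(\<Sum>w\<in>e. card (P w)) = card (P v) + (\<Sum>w\<in>e-{v}. card (P w))"
      using sum.remove[OF ce(2) v(1)] by simp
    also have "\<dots> = card (P v)" using empty by simp
    also have "\<dots> \<le> D - 1" using Pb v(1) by simp
    finally show ?thesis unfolding P_def by simp
  next
    case False
    hence "\<forall>w\<in>e. card (P w) \<le> 2" by auto
    hence "(\<Sum>w\<in>e. card (P w)) \<le> card e * 2" using sum_bounded_above[of e "\<lambda>w. card (P w)" 2] by simp
    thus ?thesis using ce D unfolding P_def by simp
  qed
qed

theorem theorem1:
  fixes F :: "'a set set"
  assumes "finite F"
    and "uniform3 F"
    and "linear_sys F"
    and "max_degree F \<ge> 5"
  shows "card F \<le> 2 * max_degree F * matching_number F"
proof -
  let ?D = "max_degree F"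
  let ?nu = "matching_number F"
  have fin: "finite F" and unif: "uniform3 F" and lin: "linear_sys F" using assms by auto
  have finMs: "finite {M. is_matching F M}"
    by (rule finite_subset[of _ "Pow F"]) (use assms(1) in \<open>auto simp: is_matching_def\<close>)
  have ne: "{} \<in> {M. is_matching F M}" by (simp add: is_matching_def)
  have "?nu \<in> card ` {M. is_matching F M}" unfolding matching_number_def
    using finMs ne by (intro Max_in) auto
  then obtain M where M: "is_matching F M" and cM: "card M = ?nu" by auto
  have maxM: "card M' \<le> card M" if "is_matching F M'" for M'
    using cM that finMs unfolding matching_number_def by (auto intro: Max_ge)
  have MF: "M \<subseteq> F" using M is_matching_def by auto
  have fM: "finite M" using MF fin finite_subset by blast
  have Md: "\<And>A B. A\<in>M \<Longrightarrow> B\<in>M \<Longrightarrow> A\<noteq>B \<Longrightarrow> A\<inter>B={}" using M unfolding is_matching_def by auto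
  define V where "V = \<Union>M"
  have finV: "finite V" unfolding V_def using fM MF fin3[OF unif] by auto
  have cover: "f \<inter> V \<noteq> {}" if "f \<in> F" for f
  proof
    assume h: "f \<inter> V = {}"
    have fne: "f \<noteq> {}" using unif that unfolding uniform3_def by force
    have fnM: "f \<notin> M" using h fne V_def by blast
    have "is_matching F (insert f M)"
      unfolding is_matching_def
    proof
      show "insert f M \<subseteq> F" using MF that by blast
      show "\<forall>A\<in>insert f M. \<forall>B\<in>insert f M. A \<noteq> B \<longrightarrow> A \<inter> B = {}"
      proof (intro ballI impI)
        fix A B assume AB: "A \<in> insert f M" "B \<in> insert f M" "A \<noteq> B"
        have hB: "f \<inter> B = {}" if "B \<in> M" for B using h that V_def by blast
        show "A \<inter> B = {}"
        proof (cases "A = f")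
          case True
          then show ?thesis using AB hB by auto
        next
          case False
          hence AM: "A \<in> M" using AB by auto
          show ?thesis
          proof (cases "B = f")
            case True
            thus ?thesis using hB AM by (simp add: Int_commute)
          next
            case False
            thus ?thesis using AB AM Md by auto
          qed
        qed
      qed
    qed
    hence "card (insert f M) \<le> card M" by (rule maxM)
    thus False using fnM fM by simp
  qed
  define G where "G = F - M"
  have finG: "finite G" using fin G_def by simp
  have cF: "card F = card M + card G" unfolding G_def using MF fin
    by (simp add: card_Diff_subset card_mono finite_subset)
  have finU: "finite (\<Union>F)" using fin fin3[OF unif] by auto
  have degb: "card {f\<in>G. v\<in>f} \<le> ?D - 1" if vV: "v \<in> V" for v
  proof -
    obtain e where e: "e\<in>M" "v\<in>e" using vV V_def by auto
    have sub: "insert e {f\<in>G. v\<in>f} \<subseteq> star F v" unfolding star_def G_def using e MF by auto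
    have nin: "e \<notin> {f\<in>G. v\<in>f}" unfolding G_def using e by auto
    have fs: "finite (star F v)" using fin by (simp add: star_def)
    have "card (insert e {f\<in>G. v\<in>f}) \<le> card (star F v)" by (rule card_mono[OF fs sub])
    hence c1: "card {f\<in>G. v\<in>f} + 1 \<le> card (star F v)" using nin finG by simp
    have "v \<in> \<Union>F" using e MF by auto
    have "finite {card (star F x) | x. x \<in> \<Union>F}" proof -
      have "{card (star F x) | x. x \<in> \<Union>F} = (\<lambda>x. card (star F x)) ` \<Union>F" by auto
      thus ?thesis using finU by simp
    qed
    hence "card (star F v) \<le> ?D" unfolding max_degree_def using \<open>v\<in>\<Union>F\<close> by (intro Max_ge) auto
    thus ?thesis using c1 by simp
  qed
  define Pc where "Pc v = card {f\<in>G. f\<inter>V={v}}" for v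
  have pe: "(\<Sum>v\<in>e. card {f\<in>G. v\<in>f} + Pc v) \<le> 3*(?D-1) + (?D+1)" if "e\<in>M" for e
  proof -
    have ce: "card e = 3" using unif MF that unfolding uniform3_def by auto
    have "(\<Sum>v\<in>e. card {f\<in>G. v\<in>f}) \<le> card e * (?D-1)"
      using sum_bounded_above[of e "\<lambda>v. card {f\<in>G. v\<in>f}" "?D-1"] degb that V_def by auto
    moreover have "(\<Sum>v\<in>e. Pc v) \<le> ?D + 1"
      unfolding Pc_def G_def V_def
      by (rule per_edge[OF fin unif lin M fM maxM that]) (use degb[unfolded G_def V_def] assms(4) in auto)
    ultimately show ?thesis using ce by (simp add: sum.distrib)
  qed
  have "2 * card G \<le> (\<Sum>f\<in>G. card {v\<in>V. v\<in>f} + card {v\<in>V. f\<inter>V={v}})"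
  proof -
    have "2 * card G = (\<Sum>f\<in>G. 2)" by simp
    also have "\<dots> \<le> (\<Sum>f\<in>G. card {v\<in>V. v\<in>f} + card {v\<in>V. f\<inter>V={v}})"
    proof (rule sum_mono)
      fix f assume fG: "f \<in> G"
      have eq: "{v\<in>V. v\<in>f} = f \<inter> V" by auto
      have nz: "f\<inter>V \<noteq> {}" using cover fG G_def by auto
      have ff: "finite (f\<inter>V)" using finV by simp
      show "2 \<le> card {v\<in>V. v\<in>f} + card {v\<in>V. f\<inter>V={v}}"
      proof (cases "card (f\<inter>V) = 1")
        case True
        then obtain w where w: "f\<inter>V = {w}" by (auto simp: card_1_singleton_iff)
        have "{v\<in>V. f\<inter>V={v}} = {w}" using w by auto
        thus ?thesis using True eq by simp
      next
        case False
        have "card (f\<inter>V) \<noteq> 0" using nz ff by simp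
        thus ?thesis using False eq by simp
      qed
    qed
    finally show ?thesis .
  qed
  also have "\<dots> = (\<Sum>f\<in>G. card {v\<in>V. v\<in>f}) + (\<Sum>f\<in>G. card {v\<in>V. f\<inter>V={v}})"
    by (rule sum.distrib)
  also have "\<dots> = (\<Sum>v\<in>V. card {f\<in>G. v\<in>f}) + (\<Sum>v\<in>V. Pc v)"
    unfolding Pc_def using double_count[OF finV finG, of "\<lambda>f v. v\<in>f"]
      double_count[OF finV finG, of "\<lambda>f v. f\<inter>V={v}"] by simp
  also have "\<dots> = (\<Sum>v\<in>V. card {f\<in>G. v\<in>f} + Pc v)" by (simp add: sum.distrib)
  also have "\<dots> = (\<Sum>e\<in>M. \<Sum>v\<in>e. card {f\<in>G. v\<in>f} + Pc v)"
    unfolding V_def by (rule sum.Union_disjoint[simplified comp_def]) (use Md MF fin3[OF unif] in auto)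
  also have "\<dots> \<le> (\<Sum>e\<in>M. 3*(?D-1) + (?D+1))" by (rule sum_mono) (rule pe)
  also have "\<dots> = card M * (3*(?D-1) + (?D+1))" by simp
  finally have fin2: "2 * card G \<le> card M * (3*(?D-1) + (?D+1))" .
  define X where "X = 3*(?D-1) + (?D+1)"
  have X4: "X + 2 = 4 * ?D" using assms(4) unfolding X_def by simp
  have "2 * card F \<le> 2 * card M + card M * X" using fin2 cF unfolding X_def by simp
  also have "\<dots> = card M * (X + 2)" by (simp add: algebra_simps)
  also have "\<dots> = card M * (4 * ?D)" using X4 by simp
  finally have "2 * card F \<le> card M * (4 * ?D)" .
  thus ?thesis using cM by (simp add: algebra_simps)
qed

end
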